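(* Let $A\in\mathbb C^{n\times N}$, $x_0,x\in\mathbb C^n$ with $\langle x_0,x\rangle>0$, and let $\gamma=x_0+t(x-x_0)$ for some $t\in[0,1]$. Then $$\|\Im(B_\gamma^*(x-x_0))\|\le\lambda_2(\gamma)\,\|x-x_0\|,$$ where $\lambda_2(\gamma):=\max\{\|\Im(B_\gamma^*u)\|:\ u\in\mathbb C^n,\ \langle u,\gamma\rangle=0,\ \|u\|=1\}$.
   Context: $B_y:=A\,\mathrm{diag}\big(\frac{A^*y}{|A^*y|}\big)$ for $y\in\mathbb C^n$, with componentwise quotient and convention $z(j)/|z(j)|=1$ if $z(j)=0$. The real inner product on $\mathbb C^n$ is $\langle u,v\rangle=\Re(u^*v)$. *)

theory Defs
  imports "HOL-Analysis.Analysis"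
begin

text \<open>Matrices A in C^(n x N) are represented as complex^'N^'n (row index 'n, column index 'N).\<close>

definition adj_mult :: "complex^'N^'n \<Rightarrow> complex^'n \<Rightarrow> complex^'N" where
  "adj_mult A y = (\<chi> j. \<Sum>i\<in>UNIV. cnj (A$i$j) * y$i)"

definition phase :: "complex \<Rightarrow> complex" where
  "phase z = (if z = 0 then 1 else z / complex_of_real (cmod z))"

text \<open>B_y = A diag(A^* y / |A^* y|).\<close>
definition B_mat :: "complex^'N^'n \<Rightarrow> complex^'n \<Rightarrow> complex^'N^'n" where
  "B_mat A y = (\<chi> i j. A$i$j * phase ((adj_mult A y)$j))"

definition Im_vec :: "complex^'N \<Rightarrow> real^'N" where
  "Im_vec v = (\<chi> j. Im (v$j))"

definition rinner :: "complex^'n \<Rightarrow> complex^'n \<Rightarrow> real" where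
  "rinner u v = Re (\<Sum>i\<in>UNIV. cnj (u$i) * v$i)"

text \<open>lambda_2(gamma) = max { ||Im(B_gamma^* u)|| : <u,gamma> = 0, ||u|| = 1 } (max attained; written as Sup).\<close>
definition lambda2 :: "complex^'N^'n \<Rightarrow> complex^'n \<Rightarrow> real" where
  "lambda2 A g = Sup {norm (Im_vec (adj_mult (B_mat A g) u)) | u. rinner u g = 0 \<and> norm u = 1}"

end

theory Submission
  imports Defs
begin

lemma rinner_eq: "rinner u v = inner u v"
  unfolding rinner_def inner_vec_def
  by (simp add: Re_sum inner_complex_def algebra_simps)

lemma lin_f: "linear (\<lambda>v::complex^'n. Im_vec (adj_mult (M::complex^'N^'n) v))"
proof (rule linearI)
  fix a b :: "complex^'n"
  show "Im_vec (adj_mult M (a + b)) = Im_vec (adj_mult M a) + Im_vec (adj_mult M b)"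
    unfolding Im_vec_def adj_mult_def
    by (simp add: vec_eq_iff distrib_left sum.distrib Im_sum)
next
  fix c :: real and a :: "complex^'n"
  show "Im_vec (adj_mult M (c *\<^sub>R a)) = c *\<^sub>R Im_vec (adj_mult M a)"
    unfolding Im_vec_def adj_mult_def
    by (simp add: vec_eq_iff Im_sum sum_distrib_left algebra_simps)
qed

lemma t2: "cnj z * z = complex_of_real (cmod z) * complex_of_real (cmod z)"
proof -
  have "complex_of_real (cmod z) * complex_of_real (cmod z) = z * cnj z"
    using complex_norm_square[of z] by (simp only: power2_eq_square of_real_mult)
  then show ?thesis by (simp only: mult.commute)
qed

lemma phase_mult: "cnj (phase z) * z = complex_of_real (cmod z)"
proof (cases "z = 0")
  case True then show ?thesis by (simp add: phase_def)
next
  case False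
  define r where "r = complex_of_real (cmod z)"
  have r0: "r \<noteq> 0" using False by (simp add: r_def)
  have sq: "cnj z * z = r * r"
    unfolding r_def by (rule t2)
  have p: "phase z = z / r" using False by (simp add: phase_def r_def)
  have c: "cnj (phase z) = cnj z / r" unfolding p r_def by simp
  have "cnj (phase z) * z = cnj z * z / r"
    unfolding c by simp
  also have "\<dots> = r" using r0 sq by simp
  finally show ?thesis by (simp add: r_def)
qed

lemma exists_orth: "\<exists>v::complex^'n. rinner v g = 0 \<and> norm v = 1"
proof (cases "g = 0")
  case True
  obtain k :: 'n where True by blast
  have "inner (axis k (1::complex)) (axis k 1) = 1" by (simp add: inner_axis_axis)
  then have "norm (axis k (1::complex)) = 1" by (metis norm_eq_sqrt_inner real_sqrt_one)
  then show ?thesis by (intro exI[of _ "axis k 1"]) (simp add: True rinner_def)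
next
  case False
  define h where "h = (\<chi> k. \<i> * g$k)"
  have hh: "inner h h = inner g g" by (simp add: h_def inner_vec_def inner_complex_def add.commute)
  then have nh: "norm h = norm g" by (metis norm_eq_sqrt_inner)
  have "rinner h g = 0" unfolding rinner_def h_def
    by (simp add: Re_sum)
  then show ?thesis using False nh
    by (intro exI[of _ "h /\<^sub>R norm g"]) (simp add: rinner_eq)
qed

lemma f_self: "Im_vec (adj_mult (B_mat A g) g) = 0"
proof -
  have "adj_mult (B_mat A g) g $ j = cnj (phase (adj_mult A g $ j)) * adj_mult A g $ j" for j
    unfolding adj_mult_def B_mat_def
    by (simp add: sum_distrib_right mult_ac)
  then show ?thesis unfolding Im_vec_def
    by (simp add: vec_eq_iff phase_mult)
qed

theorem mainTheorem8:
  fixes A :: "complex^'N^'n" and x0 x :: "complex^'n" and t :: real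
  assumes "rinner x0 x > 0" and "0 \<le> t" and "t \<le> 1"
  shows "norm (Im_vec (adj_mult (B_mat A (x0 + t *\<^sub>R (x - x0))) (x - x0)))
           \<le> lambda2 A (x0 + t *\<^sub>R (x - x0)) * norm (x - x0)"
proof -
  define g where "g = x0 + t *\<^sub>R (x - x0)"
  define d where "d = x - x0"
  define f where "f = (\<lambda>v. Im_vec (adj_mult (B_mat A g) v))"
  have lf: "linear f" unfolding f_def by (rule lin_f)
  have fg: "f g = 0" unfolding f_def by (rule f_self)
  define \<alpha> where "\<alpha> = (if g = 0 then 0 else inner d g / inner g g)"
  define u where "u = d - \<alpha> *\<^sub>R g"
  have ug: "inner u g = 0"
    by (cases "g = 0") (auto simp: u_def \<alpha>_def inner_diff_left)
  have fd: "f d = f u"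
  proof -
    have "d = \<alpha> *\<^sub>R g + u" by (simp add: u_def)
    then have "f d = \<alpha> *\<^sub>R f g + f u" using lf by (simp add: linear_add linear_scale)
    then show ?thesis by (simp add: fg)
  qed
  have nu: "norm u \<le> norm d"
  proof -
    have "inner u u = inner u d" using ug by (simp add: u_def inner_diff_right)
    also have "\<dots> \<le> norm u * norm d" by (rule norm_cauchy_schwarz)
    finally have "norm u * norm u \<le> norm u * norm d" by (simp add: power2_eq_square[symmetric] power2_norm_eq_inner[symmetric])
    then show ?thesis
      by (cases "norm u = 0") (auto simp: mult_le_cancel_left)
  qed
  define S where "S = {norm (Im_vec (adj_mult (B_mat A g) v)) | v. rinner v g = 0 \<and> norm v = 1}"
  obtain C where C: "\<And>v. norm (f v) \<le> C * norm v"
    using linear_bounded[OF lf] by blast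
  have bdd: "bdd_above S"
  proof (rule bdd_aboveI)
    fix y assume "y \<in> S"
    then obtain v where "y = norm (f v)" "norm v = 1" unfolding S_def f_def by blast
    then show "y \<le> C" using C[of v] by simp
  qed
  obtain v0 where v0: "rinner v0 g = 0" "norm v0 = 1" using exists_orth by blast
  have "norm (f v0) \<in> S" unfolding S_def f_def using v0 by blast
  then have "norm (f v0) \<le> Sup S" using bdd by (rule cSup_upper)
  then have S0: "0 \<le> Sup S" using norm_ge_zero order_trans by blast
  show ?thesis
  proof (cases "u = 0")
    case True
    then have "f d = 0" using fd lf by (simp add: linear_0)
    then show ?thesis using S0 by (simp add: f_def g_def d_def lambda2_def S_def)
  next
    case False
    define w where "w = u /\<^sub>R norm u"
    have nw: "norm w = 1" using False by (simp add: w_def)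
    have wg: "rinner w g = 0" by (simp add: rinner_eq w_def ug)
    have "norm (f w) \<in> S" unfolding S_def f_def using nw wg by blast
    then have le: "norm (f w) \<le> Sup S" using bdd by (rule cSup_upper)
    have "f u = norm u *\<^sub>R f w"
      using False lf by (simp add: w_def linear_scale)
    then have "norm (f u) = norm u * norm (f w)" by simp
    also have "\<dots> \<le> norm u * Sup S" using le by (simp add: mult_left_mono)
    also have "\<dots> \<le> norm d * Sup S"
      using nu S0 by (intro mult_right_mono)
    finally have "norm (f d) \<le> Sup S * norm d" using fd by (simp add: mult.commute)
    then show ?thesis
      unfolding f_def lambda2_def S_def g_def d_def .
  qed
qed

end
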